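(* Let $\mathcal H$ be a Hilbert space of dimension $d$, let $H(t_i)=\sum_l E^i_l\Pi^i_l$ and $H(t_f)=\sum_k E^f_k\Pi^f_k$ be Hermitian operators on $\mathcal H$ with spectral projectors $\Pi^i_l,\Pi^f_k$, let $\Phi$ be a CPTP map on $\mathcal H$ and $\beta>0$. Let $\gamma_{\beta,i}=e^{-\beta H(t_i)}/\mathcal Z_{\beta,i}$, $\gamma_{\beta,f}=e^{-\beta H(t_f)}/\mathcal Z_{\beta,f}$ with $\mathcal Z_{\beta,i}=\mathrm{Tr}\,e^{-\beta H(t_i)}$, $\mathcal Z_{\beta,f}=\mathrm{Tr}\,e^{-\beta H(t_f)}$, and $\Delta F=-\beta^{-1}\ln(\mathcal Z_{\beta,f}/\mathcal Z_{\beta,i})$. Let $\rho_i$ be a density operator written as $\rho_i=(1-a)\gamma_{\beta,i}+a\tau$, where $a=A_w(\rho_i)$ is the weight of athermality of $\rho_i$ with respect to $\gamma_{\beta,i}$ and $\tau$ the corresponding minimal athermal state. Then the end-point-measurement average satisfies $$\big\langle e^{-\beta(\Delta E-\Delta F)}\big\rangle=\Big\{(1-a)d+a\,\mathrm{Tr}\big(\gamma_{\beta,i}^{-1}\tau\big)\Big\}\Big\{(1-a)\,\mathrm{Tr}\big(\gamma_{\beta,f}\Phi[\gamma_{\beta,i}]\big)+a\,\mathrm{Tr}\big(\gamma_{\beta,f}\Phi[\tau]\big)\Big\}.$$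
   Context: End-point-measurement (EPM) statistics: for an initial state $\rho_i$, the joint distribution is $p^{l,k}=\mathrm{Tr}(\rho_i\Pi^i_l)\,\mathrm{Tr}(\Phi[\rho_i]\Pi^f_k)$, the energy change along $(l,k)$ is $\Delta E_{l,k}=E^f_k-E^i_l$, and for a function $g$, $\langle g(\Delta E)\rangle:=\sum_{l,k}p^{l,k}g(\Delta E_{l,k})$. Weight of athermality: $A_w(\rho)=\min_{\tau\in\mathscr D(\mathcal H)}\{a\ge0:\rho=(1-a)\gamma_{\beta,i}+a\tau\}$, where $\mathscr D(\mathcal H)$ is the set of density operators; the minimal athermal state is the density operator $\tau$ attaining the minimum. *)

theory Defs
  imports Complex_Main "Jordan_Normal_Form.Matrix"
begin

definition mtrace :: "complex mat \<Rightarrow> complex" where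
  "mtrace A = (\<Sum>i<dim_row A. A $$ (i, i))"

definition adj :: "complex mat \<Rightarrow> complex mat" where
  "adj A = mat (dim_col A) (dim_row A) (\<lambda>(i, j). cnj (A $$ (j, i)))"

definition hermitian :: "complex mat \<Rightarrow> bool" where
  "hermitian A \<longleftrightarrow> dim_row A = dim_col A \<and> adj A = A"

definition psd :: "complex mat \<Rightarrow> bool" where
  "psd A \<longleftrightarrow> hermitian A \<and>
     (\<forall>v \<in> carrier_vec (dim_row A).
        0 \<le> Re (\<Sum>i<dim_row A. cnj (v $ i) * (A *\<^sub>v v) $ i))"

definition density :: "nat \<Rightarrow> complex mat \<Rightarrow> bool" where
  "density d \<rho> \<longleftrightarrow> \<rho> \<in> carrier_mat d d \<and> psd \<rho> \<and> mtrace \<rho> = 1"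

definition minv :: "nat \<Rightarrow> complex mat \<Rightarrow> complex mat" where
  "minv d A = (THE B. B \<in> carrier_mat d d \<and> A * B = 1\<^sub>m d \<and> B * A = 1\<^sub>m d)"

definition msum :: "nat \<Rightarrow> (nat \<Rightarrow> complex mat) \<Rightarrow> nat set \<Rightarrow> complex mat" where
  "msum d f I = mat d d (\<lambda>(i, j). \<Sum>l\<in>I. f l $$ (i, j))"

definition spectral_decomp ::
  "nat \<Rightarrow> complex mat \<Rightarrow> nat \<Rightarrow> (nat \<Rightarrow> real) \<Rightarrow> (nat \<Rightarrow> complex mat) \<Rightarrow> bool" where
  "spectral_decomp d H m E P \<longleftrightarrow>
     H \<in> carrier_mat d d \<and> hermitian H \<and>
     (\<forall>l<m. P l \<in> carrier_mat d d \<and> hermitian (P l) \<and> P l * P l = P l \<and> P l \<noteq> 0\<^sub>m d d) \<and>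
     (\<forall>l<m. \<forall>l'<m. l \<noteq> l' \<longrightarrow> P l * P l' = 0\<^sub>m d d \<and> E l \<noteq> E l') \<and>
     msum d P {..<m} = 1\<^sub>m d \<and>
     H = msum d (\<lambda>l. complex_of_real (E l) \<cdot>\<^sub>m P l) {..<m}"

definition exp_spec ::
  "nat \<Rightarrow> real \<Rightarrow> nat \<Rightarrow> (nat \<Rightarrow> real) \<Rightarrow> (nat \<Rightarrow> complex mat) \<Rightarrow> complex mat" where
  "exp_spec d \<beta> m E P = msum d (\<lambda>l. complex_of_real (exp (- \<beta> * E l)) \<cdot>\<^sub>m P l) {..<m}"

definition partition_fn ::
  "nat \<Rightarrow> real \<Rightarrow> nat \<Rightarrow> (nat \<Rightarrow> real) \<Rightarrow> (nat \<Rightarrow> complex mat) \<Rightarrow> complex" where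
  "partition_fn d \<beta> m E P = mtrace (exp_spec d \<beta> m E P)"

definition gibbs ::
  "nat \<Rightarrow> real \<Rightarrow> nat \<Rightarrow> (nat \<Rightarrow> real) \<Rightarrow> (nat \<Rightarrow> complex mat) \<Rightarrow> complex mat" where
  "gibbs d \<beta> m E P = (1 / partition_fn d \<beta> m E P) \<cdot>\<^sub>m exp_spec d \<beta> m E P"

text \<open>(id_n \<otimes> Phi) applied to an (n*d) x (n*d) matrix viewed as an n x n block matrix
  with d x d blocks.\<close>
definition ampl :: "nat \<Rightarrow> nat \<Rightarrow> (complex mat \<Rightarrow> complex mat) \<Rightarrow> complex mat \<Rightarrow> complex mat" where
  "ampl n d \<Phi> M = mat (n * d) (n * d) (\<lambda>(i, j).
      \<Phi> (mat d d (\<lambda>(a, b). M $$ ((i div d) * d + a, (j div d) * d + b))) $$ (i mod d, j mod d))"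

definition cptp :: "nat \<Rightarrow> (complex mat \<Rightarrow> complex mat) \<Rightarrow> bool" where
  "cptp d \<Phi> \<longleftrightarrow>
     (\<forall>X \<in> carrier_mat d d. \<Phi> X \<in> carrier_mat d d) \<and>
     (\<forall>X \<in> carrier_mat d d. \<forall>Y \<in> carrier_mat d d. \<Phi> (X + Y) = \<Phi> X + \<Phi> Y) \<and>
     (\<forall>X \<in> carrier_mat d d. \<forall>c. \<Phi> (c \<cdot>\<^sub>m X) = c \<cdot>\<^sub>m \<Phi> X) \<and>
     (\<forall>X \<in> carrier_mat d d. mtrace (\<Phi> X) = mtrace X) \<and>
     (\<forall>n. \<forall>M \<in> carrier_mat (n * d) (n * d). psd M \<longrightarrow> psd (ampl n d \<Phi> M))"

definition weight_athermality :: "nat \<Rightarrow> complex mat \<Rightarrow> complex mat \<Rightarrow> real" where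
  "weight_athermality d \<gamma> \<rho> =
     Inf {a. a \<ge> 0 \<and> (\<exists>\<tau>. density d \<tau> \<and>
             \<rho> = complex_of_real (1 - a) \<cdot>\<^sub>m \<gamma> + complex_of_real a \<cdot>\<^sub>m \<tau>)}"

definition epm_avg ::
  "(complex mat \<Rightarrow> complex mat) \<Rightarrow> complex mat \<Rightarrow>
   nat \<Rightarrow> (nat \<Rightarrow> real) \<Rightarrow> (nat \<Rightarrow> complex mat) \<Rightarrow>
   nat \<Rightarrow> (nat \<Rightarrow> real) \<Rightarrow> (nat \<Rightarrow> complex mat) \<Rightarrow> (real \<Rightarrow> complex) \<Rightarrow> complex" where
  "epm_avg \<Phi> \<rho> mi Ei Pri mf Ef Prf g =
     (\<Sum>l<mi. \<Sum>k<mf. mtrace (\<rho> * Pri l) * mtrace (\<Phi> \<rho> * Prf k) * g (Ef k - Ei l))"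

end

theory Submission
  imports Defs
begin

lemma mult_entry:
  assumes "A \<in> carrier_mat r n" "B \<in> carrier_mat n c" "i < r" "j < c"
  shows "(A * B) $$ (i,j) = (\<Sum>k<n. A $$ (i,k) * B $$ (k,j))"
  using assms by (auto simp: scalar_prod_def lessThan_atLeast0 intro!: sum.cong)

lemma msum_carrier[simp]: "msum d f I \<in> carrier_mat d d"
  by (simp add: msum_def)

lemma msum_dims[simp]: "dim_row (msum d f I) = d" "dim_col (msum d f I) = d"
  by (simp_all add: msum_def)

lemma msum_index: "i < d \<Longrightarrow> j < d \<Longrightarrow> msum d f I $$ (i,j) = (\<Sum>l\<in>I. f l $$ (i,j))"
  by (simp add: msum_def)

lemma mult_msum_right:
  assumes A: "A \<in> carrier_mat d d" and f: "\<And>l. l \<in> I \<Longrightarrow> f l \<in> carrier_mat d d"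
  shows "A * msum d f I = msum d (\<lambda>l. A * f l) I"
proof (rule eq_matI)
  fix i j assume ij: "i < dim_row (msum d (\<lambda>l. A * f l) I)" "j < dim_col (msum d (\<lambda>l. A * f l) I)"
  hence i: "i < d" and j: "j < d" by auto
  have "(A * msum d f I) $$ (i,j) = (\<Sum>k<d. A $$ (i,k) * (\<Sum>l\<in>I. f l $$ (k,j)))"
    using A i j by (subst mult_entry[OF A msum_carrier]) (simp_all add: msum_index)
  also have "\<dots> = (\<Sum>l\<in>I. \<Sum>k<d. A $$ (i,k) * f l $$ (k,j))"
    by (simp add: sum_distrib_left sum.swap[of _ I])
  also have "\<dots> = (\<Sum>l\<in>I. (A * f l) $$ (i,j))"
    using f i j A by (intro sum.cong refl) (simp add: mult_entry[OF A f])
  also have "\<dots> = msum d (\<lambda>l. A * f l) I $$ (i,j)" using i j by (simp add: msum_index)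
  finally show "(A * msum d f I) $$ (i,j) = msum d (\<lambda>l. A * f l) I $$ (i,j)" .
qed (use A in auto)

lemma mult_msum_left:
  assumes A: "A \<in> carrier_mat d d" and f: "\<And>l. l \<in> I \<Longrightarrow> f l \<in> carrier_mat d d"
  shows "msum d f I * A = msum d (\<lambda>l. f l * A) I"
proof (rule eq_matI)
  fix i j assume ij: "i < dim_row (msum d (\<lambda>l. f l * A) I)" "j < dim_col (msum d (\<lambda>l. f l * A) I)"
  hence i: "i < d" and j: "j < d" by auto
  have "(msum d f I * A) $$ (i,j) = (\<Sum>k<d. (\<Sum>l\<in>I. f l $$ (i,k)) * A $$ (k,j))"
    using A i j by (subst mult_entry[OF msum_carrier A]) (simp_all add: msum_index)
  also have "\<dots> = (\<Sum>l\<in>I. \<Sum>k<d. f l $$ (i,k) * A $$ (k,j))"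
    by (simp add: sum_distrib_right sum.swap[of _ I])
  also have "\<dots> = (\<Sum>l\<in>I. (f l * A) $$ (i,j))"
    using f i j A by (intro sum.cong refl) (simp add: mult_entry[OF f A])
  also have "\<dots> = msum d (\<lambda>l. f l * A) I $$ (i,j)" using i j by (simp add: msum_index)
  finally show "(msum d f I * A) $$ (i,j) = msum d (\<lambda>l. f l * A) I $$ (i,j)" .
qed (use A in auto)


lemma msum_cong: "(\<And>l. l \<in> I \<Longrightarrow> f l = g l) \<Longrightarrow> msum d f I = msum d g I"
  unfolding msum_def by (intro cong_mat refl) (auto intro!: sum.cong)

lemma mtrace_msum:
  assumes "\<And>l. l \<in> I \<Longrightarrow> f l \<in> carrier_mat d d"
  shows "mtrace (msum d f I) = (\<Sum>l\<in>I. mtrace (f l))"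
proof -
  have "mtrace (msum d f I) = (\<Sum>i<d. \<Sum>l\<in>I. f l $$ (i,i))"
    unfolding mtrace_def by (simp add: msum_index)
  also have "\<dots> = (\<Sum>l\<in>I. \<Sum>i<d. f l $$ (i,i))" by (rule sum.swap)
  also have "\<dots> = (\<Sum>l\<in>I. mtrace (f l))"
  proof (intro sum.cong refl)
    fix l assume "l \<in> I"
    then have "dim_row (f l) = d" using assms by auto
    then show "(\<Sum>i<d. f l $$ (i,i)) = mtrace (f l)" unfolding mtrace_def by simp
  qed
  finally show ?thesis .
qed

lemma mtrace_comm:
  assumes "A \<in> carrier_mat n m" "B \<in> carrier_mat m n"
  shows "mtrace (A * B) = mtrace (B * A)"
proof -
  have "mtrace (A * B) = (\<Sum>i<n. \<Sum>k<m. A $$ (i,k) * B $$ (k,i))"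
    unfolding mtrace_def using assms by (auto simp: mult_entry[OF assms(1,2)] mult_entry[OF assms(2,1)] simp del: index_mult_mat(1) intro!: sum.cong)
  also have "\<dots> = (\<Sum>k<m. \<Sum>i<n. B $$ (k,i) * A $$ (i,k))"
    by (subst sum.swap) (simp add: mult.commute)
  also have "\<dots> = mtrace (B * A)"
    unfolding mtrace_def using assms by (auto simp: mult_entry[OF assms(1,2)] mult_entry[OF assms(2,1)] simp del: index_mult_mat(1) intro!: sum.cong)
  finally show ?thesis .
qed

lemma mtrace_add: "A \<in> carrier_mat n n \<Longrightarrow> B \<in> carrier_mat n n \<Longrightarrow> mtrace (A + B) = mtrace A + mtrace B"
  unfolding mtrace_def by (auto simp: sum.distrib)

lemma mtrace_smult: "A \<in> carrier_mat n n \<Longrightarrow> mtrace (c \<cdot>\<^sub>m A) = c * mtrace A"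
  unfolding mtrace_def by (simp add: sum_distrib_left carrier_matD)

lemma mtrace_one: "mtrace (1\<^sub>m n) = of_nat n"
  unfolding mtrace_def by simp



lemma spec_carrier: "spectral_decomp d H m E P \<Longrightarrow> l < m \<Longrightarrow> P l \<in> carrier_mat d d"
  unfolding spectral_decomp_def by auto

lemma spec_mult_proj:
  assumes S: "spectral_decomp d H m E P" and j: "j < m"
  shows "msum d (\<lambda>l. c l \<cdot>\<^sub>m P l) {..<m} * P j = c j \<cdot>\<^sub>m P j"
proof -
  have Pc: "\<And>l. l < m \<Longrightarrow> P l \<in> carrier_mat d d" using spec_carrier[OF S] .
  have orth: "\<And>l. l < m \<Longrightarrow> l \<noteq> j \<Longrightarrow> P l * P j = 0\<^sub>m d d"
    using S j unfolding spectral_decomp_def by auto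
  have idem: "P j * P j = P j" using S j unfolding spectral_decomp_def by auto
  have "msum d (\<lambda>l. c l \<cdot>\<^sub>m P l) {..<m} * P j = msum d (\<lambda>l. (c l \<cdot>\<^sub>m P l) * P j) {..<m}"
    using Pc j by (intro mult_msum_left) auto
  also have "\<dots> = msum d (\<lambda>l. if l = j then c j \<cdot>\<^sub>m P j else 0\<^sub>m d d) {..<m}"
  proof (rule msum_cong)
    fix l assume l: "l \<in> {..<m}"
    have "(c l \<cdot>\<^sub>m P l) * P j = c l \<cdot>\<^sub>m (P l * P j)"
      using Pc l j by (intro mult_smult_assoc_mat) auto
    then show "(c l \<cdot>\<^sub>m P l) * P j = (if l = j then c j \<cdot>\<^sub>m P j else 0\<^sub>m d d)"
      using orth[of l] idem l by auto
  qed
  also have "\<dots> = c j \<cdot>\<^sub>m P j"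
  proof (rule eq_matI)
    fix a b assume ab: "a < dim_row (c j \<cdot>\<^sub>m P j)" "b < dim_col (c j \<cdot>\<^sub>m P j)"
    then have a: "a < d" and b: "b < d" using Pc[OF j] by auto
    have "msum d (\<lambda>l. if l = j then c j \<cdot>\<^sub>m P j else 0\<^sub>m d d) {..<m} $$ (a,b)
        = (\<Sum>l<m. if l = j then (c j \<cdot>\<^sub>m P j) $$ (a,b) else 0)"
      using a b by (simp add: msum_index if_distrib[of "\<lambda>X. X $$ (a,b)"] cong: if_cong)
    also have "\<dots> = (c j \<cdot>\<^sub>m P j) $$ (a,b)" using j by simp
    finally show "msum d (\<lambda>l. if l = j then c j \<cdot>\<^sub>m P j else 0\<^sub>m d d) {..<m} $$ (a,b) = (c j \<cdot>\<^sub>m P j) $$ (a,b)" .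
  qed (use Pc[OF j] in auto)
  finally show ?thesis .
qed

lemma msum_smult_entry:
  assumes "\<And>l. l \<in> I \<Longrightarrow> P l \<in> carrier_mat d d"
  shows "msum d (\<lambda>l. k l \<cdot>\<^sub>m (c l \<cdot>\<^sub>m P l)) I = msum d (\<lambda>l. (c l * k l) \<cdot>\<^sub>m P l) I"
proof (rule msum_cong)
  fix l assume "l \<in> I"
  then have "P l \<in> carrier_mat d d" using assms by auto
  then show "k l \<cdot>\<^sub>m (c l \<cdot>\<^sub>m P l) = (c l * k l) \<cdot>\<^sub>m P l" by (intro eq_matI) auto
qed

lemma spec_mult:
  assumes S: "spectral_decomp d H m E P"
  shows "msum d (\<lambda>l. c l \<cdot>\<^sub>m P l) {..<m} * msum d (\<lambda>l. c' l \<cdot>\<^sub>m P l) {..<m}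
       = msum d (\<lambda>l. (c l * c' l) \<cdot>\<^sub>m P l) {..<m}"
proof -
  have Pc: "\<And>l. l < m \<Longrightarrow> P l \<in> carrier_mat d d" using spec_carrier[OF S] .
  let ?G = "msum d (\<lambda>l. c l \<cdot>\<^sub>m P l) {..<m}"
  have "?G * msum d (\<lambda>l. c' l \<cdot>\<^sub>m P l) {..<m} = msum d (\<lambda>l. ?G * (c' l \<cdot>\<^sub>m P l)) {..<m}"
    using Pc by (intro mult_msum_right) auto
  also have "\<dots> = msum d (\<lambda>l. c' l \<cdot>\<^sub>m (c l \<cdot>\<^sub>m P l)) {..<m}"
  proof (rule msum_cong)
    fix l assume l: "l \<in> {..<m}"
    have "?G * (c' l \<cdot>\<^sub>m P l) = c' l \<cdot>\<^sub>m (?G * P l)"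
      using Pc l by (intro mult_smult_distrib) auto
    then show "?G * (c' l \<cdot>\<^sub>m P l) = c' l \<cdot>\<^sub>m (c l \<cdot>\<^sub>m P l)"
      using spec_mult_proj[OF S, of l c] l by simp
  qed
  also have "\<dots> = msum d (\<lambda>l. (c l * c' l) \<cdot>\<^sub>m P l) {..<m}"
    using Pc by (intro msum_smult_entry) auto
  finally show ?thesis .
qed

lemma smult_msum:
  assumes "\<And>l. l \<in> I \<Longrightarrow> P l \<in> carrier_mat d d"
  shows "k \<cdot>\<^sub>m msum d (\<lambda>l. c l \<cdot>\<^sub>m P l) I = msum d (\<lambda>l. (k * c l) \<cdot>\<^sub>m P l) I"
proof (rule eq_matI)
  fix i j assume "i < dim_row (msum d (\<lambda>l. (k * c l) \<cdot>\<^sub>m P l) I)" "j < dim_col (msum d (\<lambda>l. (k * c l) \<cdot>\<^sub>m P l) I)"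
  then have i: "i < d" and j: "j < d" by auto
  have "(k \<cdot>\<^sub>m msum d (\<lambda>l. c l \<cdot>\<^sub>m P l) I) $$ (i,j) = k * (\<Sum>l\<in>I. (c l \<cdot>\<^sub>m P l) $$ (i,j))"
    using i j by (simp add: msum_index)
  also have "\<dots> = (\<Sum>l\<in>I. ((k * c l) \<cdot>\<^sub>m P l) $$ (i,j))"
    unfolding sum_distrib_left
  proof (intro sum.cong refl)
    fix l assume "l \<in> I"
    then have "P l \<in> carrier_mat d d" using assms by auto
    then show "k * (c l \<cdot>\<^sub>m P l) $$ (i,j) = ((k * c l) \<cdot>\<^sub>m P l) $$ (i,j)" using i j by simp
  qed
  also have "\<dots> = msum d (\<lambda>l. (k * c l) \<cdot>\<^sub>m P l) I $$ (i,j)" using i j by (simp add: msum_index)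
  finally show "(k \<cdot>\<^sub>m msum d (\<lambda>l. c l \<cdot>\<^sub>m P l) I) $$ (i,j) = msum d (\<lambda>l. (k * c l) \<cdot>\<^sub>m P l) I $$ (i,j)" .
qed auto

lemma spec_one:
  assumes S: "spectral_decomp d H m E P"
  shows "msum d (\<lambda>l. 1 \<cdot>\<^sub>m P l) {..<m} = 1\<^sub>m d"
proof -
  have "msum d (\<lambda>l. 1 \<cdot>\<^sub>m P l) {..<m} = msum d P {..<m}"
    using spec_carrier[OF S] by (intro msum_cong eq_matI) auto
  then show ?thesis using S unfolding spectral_decomp_def by simp
qed

lemma spec_trace:
  assumes S: "spectral_decomp d H m E P" and X: "X \<in> carrier_mat d d"
  shows "mtrace (X * msum d (\<lambda>l. c l \<cdot>\<^sub>m P l) {..<m}) = (\<Sum>l<m. c l * mtrace (X * P l))"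
proof -
  have Pc: "\<And>l. l < m \<Longrightarrow> P l \<in> carrier_mat d d" using spec_carrier[OF S] .
  have "mtrace (X * msum d (\<lambda>l. c l \<cdot>\<^sub>m P l) {..<m}) = mtrace (msum d (\<lambda>l. X * (c l \<cdot>\<^sub>m P l)) {..<m})"
    using Pc X by (subst mult_msum_right) auto
  also have "\<dots> = (\<Sum>l<m. mtrace (X * (c l \<cdot>\<^sub>m P l)))"
    using Pc X by (intro mtrace_msum) auto
  also have "\<dots> = (\<Sum>l<m. c l * mtrace (X * P l))"
  proof (intro sum.cong refl)
    fix l assume "l \<in> {..<m}"
    then have P: "P l \<in> carrier_mat d d" using Pc by auto
    then have "X * (c l \<cdot>\<^sub>m P l) = c l \<cdot>\<^sub>m (X * P l)" using X by (intro mult_smult_distrib)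
    moreover have "X * P l \<in> carrier_mat d d" using X P by simp
    ultimately show "mtrace (X * (c l \<cdot>\<^sub>m P l)) = c l * mtrace (X * P l)" by (simp add: mtrace_smult)
  qed
  finally show ?thesis .
qed

lemma trace_proj:
  assumes "P \<in> carrier_mat d d" "hermitian P" "P * P = P"
  shows "mtrace P = of_real (\<Sum>i<d. \<Sum>j<d. (cmod (P $$ (i,j)))^2)"
proof -
  have h: "\<And>i j. i < d \<Longrightarrow> j < d \<Longrightarrow> P $$ (j,i) = cnj (P $$ (i,j))"
  proof -
    fix i j assume "i < d" "j < d"
    have "adj P $$ (j,i) = cnj (P $$ (i,j))" using assms(1) \<open>i<d\<close> \<open>j<d\<close> unfolding adj_def by auto
    moreover have "adj P = P" using assms(2) unfolding hermitian_def by blast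
    ultimately show "P $$ (j,i) = cnj (P $$ (i,j))" by simp
  qed
  have "mtrace P = mtrace (P * P)" using assms(3) by (rule sym[THEN arg_cong])
  also have "\<dots> = (\<Sum>i<d. \<Sum>j<d. P $$ (i,j) * P $$ (j,i))"
  proof -
    have "dim_row (P * P) = d" using assms(1) by simp
    then have "mtrace (P * P) = (\<Sum>i<d. (P * P) $$ (i,i))" unfolding mtrace_def by simp
    also have "\<dots> = (\<Sum>i<d. \<Sum>j<d. P $$ (i,j) * P $$ (j,i))"
      by (intro sum.cong refl, rule mult_entry[OF assms(1) assms(1)]) auto
    finally show ?thesis .
  qed
  also have "\<dots> = (\<Sum>i<d. \<Sum>j<d. of_real ((cmod (P $$ (i,j)))^2))"
  proof (intro sum.cong refl)
    fix i j assume "i \<in> {..<d}" "j \<in> {..<d}"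
    then have "P $$ (j,i) = cnj (P $$ (i,j))" by (intro h) auto
    then show "P $$ (i,j) * P $$ (j,i) = of_real ((cmod (P $$ (i,j)))^2)"
      by (simp only: complex_norm_square)
  qed
  also have "\<dots> = of_real (\<Sum>i<d. \<Sum>j<d. (cmod (P $$ (i,j)))^2)" by simp
  finally show ?thesis .
qed


lemma spec_trace_sum:
  assumes S: "spectral_decomp d H m E P"
  shows "(\<Sum>l<m. mtrace (P l)) = of_nat d"
proof -
  have "mtrace (1\<^sub>m d * msum d (\<lambda>l. 1 \<cdot>\<^sub>m P l) {..<m}) = (\<Sum>l<m. 1 * mtrace (1\<^sub>m d * P l))"
    using S by (intro spec_trace) auto
  moreover have "\<And>l. l < m \<Longrightarrow> 1\<^sub>m d * P l = P l" using spec_carrier[OF S] left_mult_one_mat by blast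
  ultimately show ?thesis using spec_one[OF S] by (simp add: mtrace_one)
qed

lemma partition_pos:
  assumes S: "spectral_decomp d H m E P" and d: "d > 0"
  shows "\<exists>z>0. partition_fn d \<beta> m E P = complex_of_real z"
proof -
  define r where "r l = (\<Sum>i<d. \<Sum>j<d. (cmod (P l $$ (i,j)))^2)" for l
  have tr: "mtrace (P l) = of_real (r l)" if "l < m" for l
    unfolding r_def using S that unfolding spectral_decomp_def by (intro trace_proj) auto
  have r0: "r l \<ge> 0" for l unfolding r_def by (intro sum_nonneg) auto
  have "(\<Sum>l<m. complex_of_real (r l)) = of_nat d"
    using spec_trace_sum[OF S] tr by simp
  then have rs: "(\<Sum>l<m. r l) = real d"
    by (metis of_real_eq_iff of_real_of_nat_eq of_real_sum)
  have "\<exists>l<m. r l > 0"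
  proof (rule ccontr)
    assume "\<not> (\<exists>l<m. r l > 0)"
    then have "\<forall>l\<in>{..<m}. r l \<le> 0" by auto
    then have "(\<Sum>l<m. r l) \<le> 0" by (intro sum_nonpos) auto
    with rs d show False by simp
  qed
  then obtain l0 where l0: "l0 < m" "r l0 > 0" by blast
  have "partition_fn d \<beta> m E P = mtrace (1\<^sub>m d * exp_spec d \<beta> m E P)"
    unfolding partition_fn_def exp_spec_def by simp
  also have "\<dots> = (\<Sum>l<m. complex_of_real (exp (- \<beta> * E l)) * mtrace (1\<^sub>m d * P l))"
    unfolding exp_spec_def using S by (intro spec_trace) auto
  also have "\<dots> = (\<Sum>l<m. complex_of_real (exp (- \<beta> * E l) * r l))"
  proof (intro sum.cong refl)
    fix l assume l: "l \<in> {..<m}"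
    then have "1\<^sub>m d * P l = P l" using spec_carrier[OF S] left_mult_one_mat by blast
    then show "complex_of_real (exp (- \<beta> * E l)) * mtrace (1\<^sub>m d * P l) = complex_of_real (exp (- \<beta> * E l) * r l)"
      using tr l by simp
  qed
  also have "\<dots> = complex_of_real (\<Sum>l<m. exp (- \<beta> * E l) * r l)" by simp
  finally have eq: "partition_fn d \<beta> m E P = complex_of_real (\<Sum>l<m. exp (- \<beta> * E l) * r l)" .
  have "(\<Sum>l<m. exp (- \<beta> * E l) * r l) > 0"
    using l0 r0 by (intro sum_pos2[of _ l0]) auto
  then show ?thesis using eq by blast
qed


lemma minv_unique:
  assumes A: "A \<in> carrier_mat d d" and B: "B \<in> carrier_mat d d" "A * B = 1\<^sub>m d" "B * A = 1\<^sub>m d"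
  shows "minv d A = B"
  unfolding minv_def
proof (rule the_equality)
  show "B \<in> carrier_mat d d \<and> A * B = 1\<^sub>m d \<and> B * A = 1\<^sub>m d" using B by blast
next
  fix C assume C: "C \<in> carrier_mat d d \<and> A * C = 1\<^sub>m d \<and> C * A = 1\<^sub>m d"
  have "C = C * (A * B)" using B(2) C right_mult_one_mat by metis
  also have "\<dots> = (C * A) * B" by (rule assoc_mult_mat[symmetric, of C d d A d B d]) (use A B C in auto)
  also have "\<dots> = B" using B(1) C left_mult_one_mat by metis
  finally show "C = B" .
qed

lemma exp_factor:
  fixes \<beta> zi zf ei ef :: real
  assumes b: "\<beta> > 0" and zi: "zi > 0" and zf: "zf > 0"
  shows "exp (- \<beta> * ((ef - ei) - (- (1 / \<beta>) * ln (zf / zi))))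
       = (zi * exp (\<beta> * ei)) * (1 / zf * exp (- \<beta> * ef))"
proof -
  have "- \<beta> * ((ef - ei) - (- (1 / \<beta>) * ln (zf / zi))) = \<beta> * ei + (- \<beta> * ef) + (- ln (zf / zi))"
  proof -
    have "\<beta> \<noteq> 0" using b by simp
    then have bb: "\<beta> * (1 / \<beta>) = 1" by simp
    have "- \<beta> * ((ef - ei) - (- (1 / \<beta>) * ln (zf / zi))) = \<beta> * ei + (- \<beta> * ef) + (- ((\<beta> * (1 / \<beta>)) * ln (zf / zi)))"
      by (simp add: algebra_simps)
    then show ?thesis unfolding bb by simp
  qed
  then have "exp (- \<beta> * ((ef - ei) - (- (1 / \<beta>) * ln (zf / zi)))) = exp (\<beta> * ei) * exp (- \<beta> * ef) * exp (- ln (zf / zi))"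
    by (simp only: exp_add)
  also have "exp (- ln (zf / zi)) = zi / zf" using zi zf by (simp add: exp_minus)
  finally show ?thesis by simp
qed

theorem mainTheorem2:
  fixes d mi mf :: nat and Hi Hf \<rho> \<tau> :: "complex mat"
    and Ei Ef :: "nat \<Rightarrow> real" and Pri Prf :: "nat \<Rightarrow> complex mat"
    and \<Phi> :: "complex mat \<Rightarrow> complex mat" and \<beta> a :: real
  assumes "d > 0"
    and "spectral_decomp d Hi mi Ei Pri"
    and "spectral_decomp d Hf mf Ef Prf"
    and "cptp d \<Phi>"
    and "\<beta> > 0"
    and "density d \<rho>"
    and "a = weight_athermality d (gibbs d \<beta> mi Ei Pri) \<rho>"
    and "density d \<tau>"
    and "\<rho> = complex_of_real (1 - a) \<cdot>\<^sub>m gibbs d \<beta> mi Ei Pri + complex_of_real a \<cdot>\<^sub>m \<tau>"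
  shows "(let Zi = Re (partition_fn d \<beta> mi Ei Pri); Zf = Re (partition_fn d \<beta> mf Ef Prf);
              \<Delta>F = - (1 / \<beta>) * ln (Zf / Zi);
              \<gamma>i = gibbs d \<beta> mi Ei Pri; \<gamma>f = gibbs d \<beta> mf Ef Prf
          in epm_avg \<Phi> \<rho> mi Ei Pri mf Ef Prf (\<lambda>\<Delta>E. complex_of_real (exp (- \<beta> * (\<Delta>E - \<Delta>F))))
             = (complex_of_real ((1 - a) * real d) + complex_of_real a * mtrace (minv d \<gamma>i * \<tau>))
               * (complex_of_real (1 - a) * mtrace (\<gamma>f * \<Phi> \<gamma>i)
                  + complex_of_real a * mtrace (\<gamma>f * \<Phi> \<tau>)))"
proof -
  note d = assms(1) and Si = assms(2) and Sf = assms(3) and cp = assms(4) and b = assms(5)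
  obtain zi where zi: "zi > 0" "partition_fn d \<beta> mi Ei Pri = complex_of_real zi"
    using partition_pos[OF Si d] by blast
  obtain zf where zf: "zf > 0" "partition_fn d \<beta> mf Ef Prf = complex_of_real zf"
    using partition_pos[OF Sf d] by blast
  define \<gamma>i where "\<gamma>i = gibbs d \<beta> mi Ei Pri"
  define \<gamma>f where "\<gamma>f = gibbs d \<beta> mf Ef Prf"
  define Mi where "Mi = msum d (\<lambda>l. complex_of_real (zi * exp (\<beta> * Ei l)) \<cdot>\<^sub>m Pri l) {..<mi}"
  have Pic: "\<And>l. l \<in> {..<mi} \<Longrightarrow> Pri l \<in> carrier_mat d d" using spec_carrier[OF Si] by auto
  have Pfc: "\<And>l. l \<in> {..<mf} \<Longrightarrow> Prf l \<in> carrier_mat d d" using spec_carrier[OF Sf] by auto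
  have gi: "\<gamma>i = msum d (\<lambda>l. (1 / complex_of_real zi * complex_of_real (exp (- \<beta> * Ei l))) \<cdot>\<^sub>m Pri l) {..<mi}"
    unfolding \<gamma>i_def gibbs_def exp_spec_def zi(2) using Pic by (rule smult_msum)
  have gf: "\<gamma>f = msum d (\<lambda>l. (1 / complex_of_real zf * complex_of_real (exp (- \<beta> * Ef l))) \<cdot>\<^sub>m Prf l) {..<mf}"
    unfolding \<gamma>f_def gibbs_def exp_spec_def zf(2) using Pfc by (rule smult_msum)
  have gic: "\<gamma>i \<in> carrier_mat d d" and gfc: "\<gamma>f \<in> carrier_mat d d" and Mic: "Mi \<in> carrier_mat d d"
    unfolding gi gf Mi_def by auto
  have one: "(1 / complex_of_real zi * complex_of_real (exp (- \<beta> * Ei l))) * complex_of_real (zi * exp (\<beta> * Ei l)) = 1"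
    "complex_of_real (zi * exp (\<beta> * Ei l)) * (1 / complex_of_real zi * complex_of_real (exp (- \<beta> * Ei l))) = 1" for l
  proof -
    have "(1 / zi * exp (- \<beta> * Ei l)) * (zi * exp (\<beta> * Ei l)) = 1"
      using zi(1) by (simp add: exp_minus field_simps)
    then have "complex_of_real ((1 / zi * exp (- \<beta> * Ei l)) * (zi * exp (\<beta> * Ei l))) = 1" by simp
    then show o1: "(1 / complex_of_real zi * complex_of_real (exp (- \<beta> * Ei l))) * complex_of_real (zi * exp (\<beta> * Ei l)) = 1"
      by (simp only: of_real_mult of_real_divide of_real_1)
    show "complex_of_real (zi * exp (\<beta> * Ei l)) * (1 / complex_of_real zi * complex_of_real (exp (- \<beta> * Ei l))) = 1"
      by (subst mult.commute) (rule o1)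
  qed
  have giMi: "\<gamma>i * Mi = 1\<^sub>m d"
    unfolding gi Mi_def spec_mult[OF Si] one spec_one[OF Si] ..
  have Migi: "Mi * \<gamma>i = 1\<^sub>m d"
    unfolding gi Mi_def spec_mult[OF Si] one spec_one[OF Si] ..
  have minv: "minv d \<gamma>i = Mi" using minv_unique[OF gic Mic giMi Migi] .
  have rhoc: "\<rho> \<in> carrier_mat d d" using assms(6) unfolding density_def by auto
  have tauc: "\<tau> \<in> carrier_mat d d" using assms(8) unfolding density_def by auto
  have rho: "\<rho> = complex_of_real (1 - a) \<cdot>\<^sub>m \<gamma>i + complex_of_real a \<cdot>\<^sub>m \<tau>"
    using assms(9) unfolding \<gamma>i_def .
  have Phic: "\<And>X. X \<in> carrier_mat d d \<Longrightarrow> \<Phi> X \<in> carrier_mat d d" using cp unfolding cptp_def by blast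
  have Phirho: "\<Phi> \<rho> = complex_of_real (1 - a) \<cdot>\<^sub>m \<Phi> \<gamma>i + complex_of_real a \<cdot>\<^sub>m \<Phi> \<tau>"
    using cp gic tauc unfolding rho cptp_def by auto
  have Re_zi: "Re (partition_fn d \<beta> mi Ei Pri) = zi" and Re_zf: "Re (partition_fn d \<beta> mf Ef Prf) = zf"
    using zi zf by auto
  have "epm_avg \<Phi> \<rho> mi Ei Pri mf Ef Prf (\<lambda>\<Delta>E. complex_of_real (exp (- \<beta> * (\<Delta>E - (- (1 / \<beta>) * ln (zf / zi))))))
      = (\<Sum>l<mi. \<Sum>k<mf. (complex_of_real (zi * exp (\<beta> * Ei l)) * mtrace (\<rho> * Pri l))
            * ((1 / complex_of_real zf * complex_of_real (exp (- \<beta> * Ef k))) * mtrace (\<Phi> \<rho> * Prf k)))"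
  proof -
    have ef: "\<And>l k. complex_of_real (exp (- \<beta> * ((Ef k - Ei l) - (- (1 / \<beta>) * ln (zf / zi)))))
       = complex_of_real (zi * exp (\<beta> * Ei l)) * (1 / complex_of_real zf * complex_of_real (exp (- \<beta> * Ef k)))"
      by (simp only: exp_factor[OF b zi(1) zf(1)] of_real_mult of_real_divide of_real_1)
    show ?thesis unfolding epm_avg_def
      by (intro sum.cong refl) (simp only: ef mult_ac)
  qed
  also have "\<dots> = (\<Sum>l<mi. complex_of_real (zi * exp (\<beta> * Ei l)) * mtrace (\<rho> * Pri l))
            * (\<Sum>k<mf. (1 / complex_of_real zf * complex_of_real (exp (- \<beta> * Ef k))) * mtrace (\<Phi> \<rho> * Prf k))"
    by (simp add: sum_product)
  also have "\<dots> = mtrace (\<rho> * Mi) * mtrace (\<Phi> \<rho> * \<gamma>f)"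
    unfolding Mi_def gf using spec_trace[OF Si rhoc] spec_trace[OF Sf Phic[OF rhoc]] by simp
  finally have lhs: "epm_avg \<Phi> \<rho> mi Ei Pri mf Ef Prf (\<lambda>\<Delta>E. complex_of_real (exp (- \<beta> * (\<Delta>E - (- (1 / \<beta>) * ln (zf / zi))))))
     = mtrace (\<rho> * Mi) * mtrace (\<Phi> \<rho> * \<gamma>f)" .
  have t1: "mtrace (\<rho> * Mi) = complex_of_real ((1 - a) * real d) + complex_of_real a * mtrace (Mi * \<tau>)"
  proof -
    have "\<rho> * Mi = complex_of_real (1 - a) \<cdot>\<^sub>m (\<gamma>i * Mi) + complex_of_real a \<cdot>\<^sub>m (\<tau> * Mi)"
      unfolding rho using gic tauc Mic
      by (simp add: add_mult_distrib_mat[of _ d d _ _ d] mult_smult_assoc_mat[of _ d d _ d])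
    then show ?thesis using gic tauc Mic giMi
      by (simp add: mtrace_add[of _ d] mtrace_smult[of _ d] mtrace_one mtrace_comm[OF tauc Mic])
  qed
  have t2: "mtrace (\<Phi> \<rho> * \<gamma>f) = complex_of_real (1 - a) * mtrace (\<gamma>f * \<Phi> \<gamma>i) + complex_of_real a * mtrace (\<gamma>f * \<Phi> \<tau>)"
  proof -
    have c1: "\<Phi> \<gamma>i \<in> carrier_mat d d" and c2: "\<Phi> \<tau> \<in> carrier_mat d d" using Phic gic tauc by auto
    have "\<Phi> \<rho> * \<gamma>f = complex_of_real (1 - a) \<cdot>\<^sub>m (\<Phi> \<gamma>i * \<gamma>f) + complex_of_real a \<cdot>\<^sub>m (\<Phi> \<tau> * \<gamma>f)"
      unfolding Phirho using c1 c2 gfc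
      by (simp add: add_mult_distrib_mat[of _ d d _ _ d] mult_smult_assoc_mat[of _ d d _ d])
    then show ?thesis using c1 c2 gfc
      by (simp add: mtrace_add[of _ d] mtrace_smult[of _ d] mtrace_comm[OF c1 gfc] mtrace_comm[OF c2 gfc])
  qed
  show ?thesis
    unfolding Let_def Re_zi Re_zf \<gamma>i_def[symmetric] \<gamma>f_def[symmetric] lhs t1 t2 minv ..
qed

end
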